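(* Let $\alpha\in\mathbb R^n$ be a unit vector and $a_1,\dots,a_r\in\mathbb R$ with $a_1^2+\dots+a_r^2\neq0$, and let $\Gamma=(a_1\alpha\ \cdots\ a_r\alpha)$, so that $\operatorname{tr}(X^T\Gamma)=\langle a_1e_1+\dots+a_re_r,\alpha\rangle$ for $X=(e_1\cdots e_r)$. Take $\kappa=0$. Then the equations $$\dot X=P-XP^TX,\qquad \dot P=PX^TP-\Gamma+X\Lambda,\qquad \Lambda=\tfrac12\left(-2P^TP+X^T\Gamma+\Gamma^TX\right)$$ on $T^*V(n,r)$ imply the matrix equations $$\frac{d}{dt}\tilde L(\lambda)=[\tilde L(\lambda),\tilde A(\lambda)],\qquad\lambda\in\mathbb R,$$ where, with $\Phi=PX^T-XP^T$ and $x=a_1e_1+\dots+a_re_r$, the matrices $\tilde L(\lambda),\tilde A(\lambda)\in so(n+1)$ are $$\tilde L(\lambda)=\begin{pmatrix}-\lambda\Phi & x+\lambda^2\alpha\\ -x^T-\lambda^2\alpha^T&0\end{pmatrix},\qquad \tilde A(\lambda)=\begin{pmatrix}-\Phi&\lambda\alpha\\-\lambda\alpha^T&0\end{pmatrix}.$$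
   Context: $V(n,r)=\{X\in M_{n,r}(\mathbb R):X^TX=\mathbf I_r\}$ with columns $e_1,\dots,e_r$, and $T^*V(n,r)$ is realized as the set of pairs $(X,P)$ of real $n\times r$ matrices with $X^TX=\mathbf I_r$, $X^TP+P^TX=0$. The given equations are the Hamiltonian flow of $\frac12\operatorname{tr}(P^TP)-\frac12\operatorname{tr}((XP^T)^2)+\operatorname{tr}(X^T\Gamma)$ (the pendulum with normal metric, $\kappa=0$). *)

theory Defs
  imports "HOL-Analysis.Analysis"
begin

text \<open>Real (n+1) x (n+1) matrices are indexed by the type 'n option: Some i is the
  i-th of the first n indices, None is the extra last index.
  skew_block M v is the block matrix [[M, v], [-v^T, 0]].\<close>

definition skew_block :: "real^'n^'n \<Rightarrow> real^'n \<Rightarrow> real^('n option)^('n option)" where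
  "skew_block M v = (\<chi> i j. (case i of
       Some i' \<Rightarrow> (case j of Some j' \<Rightarrow> M $ i' $ j' | None \<Rightarrow> v $ i')
     | None \<Rightarrow> (case j of Some j' \<Rightarrow> - (v $ j') | None \<Rightarrow> 0)))"

definition Gamma_mat :: "real^'n \<Rightarrow> real^'r \<Rightarrow> real^'r^'n" where
  "Gamma_mat \<alpha> a = (\<chi> i j. \<alpha> $ i * a $ j)"

definition Phi_mat :: "real^'r^'n \<Rightarrow> real^'r^'n \<Rightarrow> real^'n^'n" where
  "Phi_mat X P = P ** transpose X - X ** transpose P"

definition Ltilde :: "real \<Rightarrow> real^'r^'n \<Rightarrow> real^'r^'n \<Rightarrow> real^'n \<Rightarrow> real^'r
    \<Rightarrow> real^('n option)^('n option)" where
  "Ltilde lam X P \<alpha> a = skew_block (- (lam *\<^sub>R Phi_mat X P)) (X *v a + lam\<^sup>2 *\<^sub>R \<alpha>)"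

definition Atilde :: "real \<Rightarrow> real^'r^'n \<Rightarrow> real^'r^'n \<Rightarrow> real^'n
    \<Rightarrow> real^('n option)^('n option)" where
  "Atilde lam X P \<alpha> = skew_block (- Phi_mat X P) (lam *\<^sub>R \<alpha>)"

end

theory Submission
  imports Defs
begin




lemma bl_mm: "bounded_bilinear ((**) :: real^'n^'m \<Rightarrow> real^'p^'n \<Rightarrow> real^'p^'m)"
  unfolding bilinear_conv_bounded_bilinear[symmetric] bilinear_def linear_iff
  by (auto simp: matrix_add_ldistrib matrix_scalar_ac scalar_matrix_assoc vec_eq_iff
      matrix_matrix_mult_def sum.distrib algebra_simps sum_distrib_left)

lemma bl_tr: "bounded_linear (transpose :: real^'n^'m \<Rightarrow> real^'m^'n)"
  by (rule bounded_linearI') (auto simp: transpose_def vec_eq_iff)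

lemma bl_mv: "bounded_linear (\<lambda>M :: real^'n^'m. M *v a)"
  by (rule bounded_linearI') (auto simp: matrix_vector_mult_def vec_eq_iff sum.distrib sum_distrib_left algebra_simps)

lemma bl_sb: "bounded_linear (\<lambda>p :: (real^'n^'n) \<times> (real^'n). skew_block (fst p) (snd p))"
  by (rule bounded_linearI') (auto simp: skew_block_def vec_eq_iff split: option.split)


lemma sum_option: "(\<Sum>k\<in>(UNIV::('a::finite) option set). f k) = f None + (\<Sum>k\<in>UNIV. f (Some k))"
proof -
  have "(UNIV::'a option set) = insert None (range Some)" by (rule UNIV_option_conv)
  show ?thesis
    apply (subst UNIV_option_conv)
    apply (subst sum.insert)
      apply (auto simp: sum.reindex)
    done
qed

lemma comm_identity:
  fixes Phi Phi' :: "real^'n^'n" and x xd \<alpha> :: "real^'n"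
  assumes sk: "\<And>i j. Phi$i$j = - Phi$j$i"
    and d: "\<And>i j. Phi'$i$j = x$i*\<alpha>$j - \<alpha>$i*x$j"
    and xd: "xd = Phi *v x"
  shows "skew_block (-(lam *\<^sub>R Phi')) (xd + 0) =
    skew_block (-(lam *\<^sub>R Phi)) (x + lam\<^sup>2 *\<^sub>R \<alpha>) ** skew_block (-Phi) (lam *\<^sub>R \<alpha>)
    - skew_block (-Phi) (lam *\<^sub>R \<alpha>) ** skew_block (-(lam *\<^sub>R Phi)) (x + lam\<^sup>2 *\<^sub>R \<alpha>)"
  unfolding vec_eq_iff
proof (intro allI)
  fix i j :: "'n option"
  show "skew_block (-(lam *\<^sub>R Phi')) (xd + 0) $ i $ j = (skew_block (-(lam *\<^sub>R Phi)) (x + lam\<^sup>2 *\<^sub>R \<alpha>) ** skew_block (-Phi) (lam *\<^sub>R \<alpha>)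
    - skew_block (-Phi) (lam *\<^sub>R \<alpha>) ** skew_block (-(lam *\<^sub>R Phi)) (x + lam\<^sup>2 *\<^sub>R \<alpha>)) $ i $ j"
  proof (cases i; cases j)
    assume "i = None" "j = None" then show ?thesis
      by (simp add: skew_block_def matrix_matrix_mult_def sum_option algebra_simps sum.distrib sum_distrib_left)
  next
    fix j' assume "i = None" "j = Some j'"
    moreover have "(\<Sum>k\<in>UNIV. x $ k * Phi $ k $ j') = - (\<Sum>k\<in>UNIV. x $ k * Phi $ j' $ k)"
      by (simp add: sum_negf[symmetric] sk[of _ j'])
    ultimately show ?thesis
      apply (simp add: skew_block_def matrix_matrix_mult_def sum_option algebra_simps sum.distrib sum_distrib_left xd matrix_vector_mult_def power2_eq_square sum_subtractf sum_negf)
      done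
  next
    fix i' assume "i = Some i'" "j = None" then show ?thesis
      apply (simp add: skew_block_def matrix_matrix_mult_def sum_option algebra_simps sum.distrib sum_distrib_left xd matrix_vector_mult_def power2_eq_square sum_subtractf sum_negf)
      done
  next
    fix i' j' assume "i = Some i'" "j = Some j'" then show ?thesis
      apply (simp add: skew_block_def matrix_matrix_mult_def sum_option algebra_simps sum.distrib sum_distrib_left d)
      done
  qed
qed


lemma mm_diff_l: "(A::real^'n^'m) ** (B - C) = A ** B - A ** C"
  by (simp add: vec_eq_iff matrix_matrix_mult_def sum_subtractf algebra_simps)
lemma mm_diff_r: "((A::real^'n^'m) - B) ** C = A ** C - B ** C"
  by (simp add: vec_eq_iff matrix_matrix_mult_def sum_subtractf algebra_simps)
lemma mm_add_r: "((A::real^'n^'m) + B) ** C = A ** C + B ** C"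
  by (simp add: vec_eq_iff matrix_matrix_mult_def sum.distrib algebra_simps)
lemma mm_neg_l: "(- (A::real^'n^'m)) ** B = - (A ** B)"
  by (simp add: vec_eq_iff matrix_matrix_mult_def sum_negf)
lemma mm_neg_r: "(A::real^'n^'m) ** (- B) = - (A ** B)"
  by (simp add: vec_eq_iff matrix_matrix_mult_def sum_negf)
lemma mm_sc_l: "(k *\<^sub>R (A::real^'n^'m)) ** B = k *\<^sub>R (A ** B)"
  by (simp add: scalar_matrix_assoc)
lemma mm_sc_r: "(A::real^'n^'m) ** (k *\<^sub>R B) = k *\<^sub>R (A ** B)"
  by (simp add: matrix_scalar_ac scalar_matrix_assoc)
lemma tr_add: "transpose ((A::real^'n^'m) + B) = transpose A + transpose B"
  by (simp add: vec_eq_iff transpose_def)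
lemma tr_diff: "transpose ((A::real^'n^'m) - B) = transpose A - transpose B"
  by (simp add: vec_eq_iff transpose_def)
lemma tr_neg: "transpose (- (A::real^'n^'m)) = - transpose A"
  by (simp add: vec_eq_iff transpose_def)

lemmas mexp = mm_diff_l mm_diff_r mm_add_r matrix_add_ldistrib mm_neg_l mm_neg_r mm_sc_l mm_sc_r
  tr_add tr_diff tr_neg transpose_scalar matrix_transpose_mul matrix_mul_assoc transpose_transpose


lemma Phid_lemma:
  fixes X P G :: "real^'r^'n"
  shows "(P ** transpose (P - X ** transpose P ** X) + (P ** transpose X ** P - G
               + X ** ((1/2) *\<^sub>R (- 2 *\<^sub>R (transpose P ** P)
                   + transpose X ** G + transpose G ** X))) ** transpose X)
   - (X ** transpose (P ** transpose X ** P - G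
               + X ** ((1/2) *\<^sub>R (- 2 *\<^sub>R (transpose P ** P)
                   + transpose X ** G + transpose G ** X))) + (P - X ** transpose P ** X) ** transpose P)
   = X ** transpose G - G ** transpose X"
  apply (simp only: mexp)
  apply (simp add: algebra_simps)
  done

lemma XGT: "(X ** transpose (Gamma_mat \<alpha> a))$i$j = (X *v a)$i * \<alpha>$j"
  by (simp add: matrix_matrix_mult_def transpose_def Gamma_mat_def matrix_vector_mult_def sum_distrib_right sum_distrib_left mult_ac)
lemma GXT: "(Gamma_mat \<alpha> a ** transpose X)$i$j = \<alpha>$i * (X *v a)$j"
  by (simp add: matrix_matrix_mult_def transpose_def Gamma_mat_def matrix_vector_mult_def sum_distrib_left mult_ac)
lemma PhiX:
  fixes X P :: "real^'r^'n"
  assumes "transpose X ** X = mat 1"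
  shows "(P ** transpose X - X ** transpose P) ** X = P - X ** transpose P ** X"
  by (simp add: mm_diff_r matrix_mul_assoc[symmetric] assms)
theorem theorem5:
  fixes X P :: "real \<Rightarrow> real^'r^'n" and \<alpha> :: "real^'n" and a :: "real^'r"
    and T :: "real set"
  assumes "open T"
    and "norm \<alpha> = 1"
    and "(\<Sum>j\<in>UNIV. (a $ j)\<^sup>2) \<noteq> 0"
    and "\<And>t. t \<in> T \<Longrightarrow> transpose (X t) ** X t = mat 1"
    and "\<And>t. t \<in> T \<Longrightarrow> transpose (X t) ** P t + transpose (P t) ** X t = 0"
    and "\<And>t. t \<in> T \<Longrightarrow>
           (X has_vector_derivative (P t - X t ** transpose (P t) ** X t)) (at t)"
    and "\<And>t. t \<in> T \<Longrightarrow>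
           (P has_vector_derivative
              (P t ** transpose (X t) ** P t - Gamma_mat \<alpha> a
               + X t ** ((1/2) *\<^sub>R (- 2 *\<^sub>R (transpose (P t) ** P t)
                   + transpose (X t) ** Gamma_mat \<alpha> a + transpose (Gamma_mat \<alpha> a) ** X t))))
            (at t)"
  shows "\<And>lam t. t \<in> T \<Longrightarrow>
           ((\<lambda>s. Ltilde lam (X s) (P s) \<alpha> a) has_vector_derivative
              (Ltilde lam (X t) (P t) \<alpha> a ** Atilde lam (X t) (P t) \<alpha>
               - Atilde lam (X t) (P t) \<alpha> ** Ltilde lam (X t) (P t) \<alpha> a)) (at t)"
proof -
  fix lam t assume tT: "t \<in> T"
  define G where "G = Gamma_mat \<alpha> a"
  define Xd where "Xd = P t - X t ** transpose (P t) ** X t"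
  define Pd where "Pd = P t ** transpose (X t) ** P t - G
               + X t ** ((1/2) *\<^sub>R (- 2 *\<^sub>R (transpose (P t) ** P t)
                   + transpose (X t) ** G + transpose G ** X t))"
  have dX: "(X has_vector_derivative Xd) (at t)" using assms(6)[OF tT] by (simp add: Xd_def)
  have dP: "(P has_vector_derivative Pd) (at t)" using assms(7)[OF tT] by (simp add: Pd_def G_def)
  have dXT: "((\<lambda>s. transpose (X s)) has_vector_derivative transpose Xd) (at t)"
    using bounded_linear.has_vector_derivative[OF bl_tr dX] .
  have dPT: "((\<lambda>s. transpose (P s)) has_vector_derivative transpose Pd) (at t)"
    using bounded_linear.has_vector_derivative[OF bl_tr dP] .
  define Phid where "Phid = (P t ** transpose Xd + Pd ** transpose (X t)) - (X t ** transpose Pd + Xd ** transpose (P t))"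
  have dPhi: "((\<lambda>s. Phi_mat (X s) (P s)) has_vector_derivative Phid) (at t)"
    unfolding Phi_mat_def Phid_def
    by (intro has_vector_derivative_diff bounded_bilinear.has_vector_derivative[OF bl_mm] dX dP dXT dPT)
  have Phid_eq: "Phid = X t ** transpose G - G ** transpose (X t)"
    unfolding Phid_def Pd_def Xd_def by (rule Phid_lemma)
  have dx: "((\<lambda>s. X s *v a + lam\<^sup>2 *\<^sub>R \<alpha>) has_vector_derivative Xd *v a + 0) (at t)"
    by (intro has_vector_derivative_add has_vector_derivative_const bounded_linear.has_vector_derivative[OF bl_mv] dX)
  have dm: "((\<lambda>s. - (lam *\<^sub>R Phi_mat (X s) (P s))) has_vector_derivative - (lam *\<^sub>R Phid)) (at t)"
    by (intro has_vector_derivative_minus bounded_linear.has_vector_derivative[OF bounded_linear_scaleR_right dPhi])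
  have dL: "((\<lambda>s. Ltilde lam (X s) (P s) \<alpha> a) has_vector_derivative skew_block (- (lam *\<^sub>R Phid)) (Xd *v a + 0)) (at t)"
    unfolding Ltilde_def
    using bounded_linear.has_vector_derivative[OF bl_sb has_vector_derivative_Pair[OF dm dx]] by simp
  show "((\<lambda>s. Ltilde lam (X s) (P s) \<alpha> a) has_vector_derivative
              (Ltilde lam (X t) (P t) \<alpha> a ** Atilde lam (X t) (P t) \<alpha>
               - Atilde lam (X t) (P t) \<alpha> ** Ltilde lam (X t) (P t) \<alpha> a)) (at t)"
  proof (rule has_vector_derivative_eq_rhs[OF dL])
    define Phi where "Phi = Phi_mat (X t) (P t)"
    define x where "x = X t *v a"
    have sk: "\<And>i j. Phi$i$j = - Phi$j$i"
      by (simp add: Phi_def Phi_mat_def matrix_matrix_mult_def transpose_def mult.commute)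
    have d: "\<And>i j. Phid$i$j = x$i*\<alpha>$j - \<alpha>$i*x$j"
      by (simp add: Phid_eq G_def XGT GXT x_def)
    have "Phi *v x = (Phi ** X t) *v a" by (simp add: x_def matrix_vector_mul_assoc)
    also have "Phi ** X t = Xd"
      unfolding Phi_def Phi_mat_def Xd_def by (rule PhiX[OF assms(4)[OF tT]])
    finally have xd: "Xd *v a = Phi *v x" by simp
    show "skew_block (- (lam *\<^sub>R Phid)) (Xd *v a + 0) =
      Ltilde lam (X t) (P t) \<alpha> a ** Atilde lam (X t) (P t) \<alpha> - Atilde lam (X t) (P t) \<alpha> ** Ltilde lam (X t) (P t) \<alpha> a"
      unfolding Ltilde_def Atilde_def Phi_def[symmetric] x_def[symmetric]
      by (rule comm_identity[OF sk d xd])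
  qed
qed

end
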